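(* Let $n\ge 3$. The maps $A,B,C,D,E$ defined below are injective, their images are faces of $\Delta_{n+1}$, and the set of faces of $\Delta_{n+1}$ is the disjoint union of the images of $A$, $B$, $C$, $D$, $E$. Moreover, for each fixed $i\in\{2,\dots,n\}$, the image $\{E(F,i):F\in\Delta_n\}$ equals the set of faces of $\Delta_{n+1}$ containing the vertex $\{i,n+1\}$, it is isomorphic as a poset (under inclusion) to the face poset of $\Delta_n$, and it is an upper order ideal in the face poset of $\Delta_{n+1}$.
   Context: The Whitehouse complex $\Delta_n$ ($n\ge 3$) is the simplicial complex with vertex set $V_n=\{S\subseteq\{2,\dots,n\}: 2\le |S|\le n-2\}$, in which a subset $F\subseteq V_n$ is a face iff for all $S,T\in F$ one has $S\subseteq T$, $T\subseteq S$, or $S\cap T=\emptyset$. (So $\Delta_3=\{\emptyset\}$.) Its face poset is the set of its faces (including $\emptyset$) ordered by inclusion. For a face $F$ of $\Delta_n$ define: $A(F)=F$; $B(F)=F\cup\{\{2,\dots,n\}\}$; for $S\in F$, $C(F,S)=\{T\cup\{n+1\}: T\in F, S\subseteq T\}\cup\{T: T\in F, S\not\subseteq T\}$ and $D(F,S)=C(F,S)\cup\{S\}$; for $2\le i\le n$, $E(F,i)=\{\{i,n+1\}\}\cup\{T\cup\{n+1\}: T\in F, i\in T\}\cup\{T: T\in F, i\notin T\}$. Here $A,B$ have domain the faces of $\Delta_n$, $C,D$ have domain the pairs $(F,S)$ with $F$ a face and $S\in F$, and $E$ has domain the pairs $(F,i)$ with $F$ a face and $2\le i\le n$. *)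

theory Defs
  imports Main
begin

definition wh_vertices :: "nat \<Rightarrow> nat set set" where
  "wh_vertices n = {S. S \<subseteq> {2..n} \<and> 2 \<le> card S \<and> card S \<le> n - 2}"

definition wh_compatible :: "nat set \<Rightarrow> nat set \<Rightarrow> bool" where
  "wh_compatible S T \<longleftrightarrow> S \<subseteq> T \<or> T \<subseteq> S \<or> S \<inter> T = {}"

definition wh_faces :: "nat \<Rightarrow> nat set set set" where
  "wh_faces n = {F. F \<subseteq> wh_vertices n \<and> (\<forall>S\<in>F. \<forall>T\<in>F. wh_compatible S T)}"

definition mapA :: "nat set set \<Rightarrow> nat set set" where
  "mapA F = F"

definition mapB :: "nat \<Rightarrow> nat set set \<Rightarrow> nat set set" where
  "mapB n F = insert {2..n} F"

definition mapC :: "nat \<Rightarrow> nat set set \<Rightarrow> nat set \<Rightarrow> nat set set" where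
  "mapC n F S = {insert (n+1) T | T. T \<in> F \<and> S \<subseteq> T} \<union> {T. T \<in> F \<and> \<not> S \<subseteq> T}"

definition mapD :: "nat \<Rightarrow> nat set set \<Rightarrow> nat set \<Rightarrow> nat set set" where
  "mapD n F S = insert S (mapC n F S)"

definition mapE :: "nat \<Rightarrow> nat set set \<Rightarrow> nat \<Rightarrow> nat set set" where
  "mapE n F i = {{i, n+1}} \<union> {insert (n+1) T | T. T \<in> F \<and> i \<in> T} \<union> {T. T \<in> F \<and> i \<notin> T}"

definition domCD :: "nat \<Rightarrow> (nat set set \<times> nat set) set" where
  "domCD n = {(F, S). F \<in> wh_faces n \<and> S \<in> F}"

definition domE :: "nat \<Rightarrow> (nat set set \<times> nat) set" where
  "domE n = {(F, i). F \<in> wh_faces n \<and> i \<in> {2..n}}"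

definition imA :: "nat \<Rightarrow> nat set set set" where
  "imA n = mapA ` wh_faces n"

definition imB :: "nat \<Rightarrow> nat set set set" where
  "imB n = mapB n ` wh_faces n"

definition imC :: "nat \<Rightarrow> nat set set set" where
  "imC n = (\<lambda>(F, S). mapC n F S) ` domCD n"

definition imD :: "nat \<Rightarrow> nat set set set" where
  "imD n = (\<lambda>(F, S). mapD n F S) ` domCD n"

definition imE :: "nat \<Rightarrow> nat set set set" where
  "imE n = (\<lambda>(F, i). mapE n F i) ` domE n"

end

theory Submission
  imports Defs
begin

definition dec :: "nat \<Rightarrow> nat set set \<Rightarrow> nat set \<Rightarrow> nat set set" where
  "dec n X S = {T. n+1 \<notin> T \<and> 2 \<le> card T \<and> (if S \<subseteq> T then insert (n+1) T \<in> X else T \<in> X)}"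

lemma dec_mono: "X \<subseteq> Y \<Longrightarrow> dec n X S \<subseteq> dec n Y S"
  by (auto simp: dec_def)

lemma vert_n: "T \<in> wh_vertices n \<Longrightarrow> T \<subseteq> {2..n} \<and> finite T \<and> 2 \<le> card T \<and> card T \<le> n-2 \<and> n+1 \<notin> T"
  unfolding wh_vertices_def using finite_subset by fastforce

lemma face_vert: "F \<in> wh_faces n \<Longrightarrow> T \<in> F \<Longrightarrow> T \<in> wh_vertices n"
  by (auto simp: wh_faces_def)

lemma face_compat: "F \<in> wh_faces n \<Longrightarrow> T \<in> F \<Longrightarrow> U \<in> F \<Longrightarrow> wh_compatible T U"
  by (auto simp: wh_faces_def)

lemma face_v: "F \<in> wh_faces n \<Longrightarrow> T \<in> F \<Longrightarrow> T \<subseteq> {2..n} \<and> finite T \<and> 2 \<le> card T \<and> card T \<le> n-2 \<and> n+1 \<notin> T"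
  using face_vert vert_n by blast

lemma memC: "X \<in> mapC n F S \<longleftrightarrow> (\<exists>T\<in>F. S \<subseteq> T \<and> X = insert (n+1) T) \<or> (X \<in> F \<and> \<not> S \<subseteq> X)"
  by (auto simp: mapC_def)

lemma E_C: "mapE n F i = insert {i,n+1} (mapC n F {i})"
  by (auto simp: mapE_def mapC_def)

lemma compat_sym: "wh_compatible A B = wh_compatible B A"
  by (auto simp: wh_compatible_def)

lemma compat_ins: "wh_compatible A B \<Longrightarrow> S \<subseteq> A \<Longrightarrow> S \<subseteq> B \<Longrightarrow> S \<noteq> {} \<Longrightarrow> wh_compatible (insert a A) (insert a B)"
  unfolding wh_compatible_def by blast

lemma compat_mix: "wh_compatible A B \<Longrightarrow> a \<notin> B \<Longrightarrow> S \<subseteq> A \<Longrightarrow> \<not> S \<subseteq> B \<Longrightarrow> wh_compatible (insert a A) B"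
  unfolding wh_compatible_def by blast

lemma compat_minus: "wh_compatible A B \<Longrightarrow> wh_compatible (A - {a}) (B - {a})"
  by (auto simp: wh_compatible_def)

lemma memC_ins:
  assumes "F \<in> wh_faces n" "n+1 \<notin> X" "insert (n+1) X \<in> mapC n F S"
  shows "S \<subseteq> X \<and> X \<in> F"
proof -
  from assms(3) consider T where "T \<in> F" "S \<subseteq> T" "insert (n+1) X = insert (n+1) T"
    | "insert (n+1) X \<in> F" unfolding memC by blast
  then show ?thesis
  proof cases
    case 1
    then have "n+1 \<notin> T" using face_v[OF assms(1) 1(1)] by simp
    then have "X = T" using 1(3) assms(2) by (simp add: insert_ident)
    then show ?thesis using 1 by simp
  next
    case 2
    then show ?thesis using face_v[OF assms(1) 2] by simp
  qed
qed

lemma dec_C: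
  assumes "F \<in> wh_faces n"
  shows "dec n (mapC n F S) S = F"
proof
  show "dec n (mapC n F S) S \<subseteq> F"
  proof
    fix T assume T: "T \<in> dec n (mapC n F S) S"
    then have T1: "n+1 \<notin> T" by (simp add: dec_def)
    show "T \<in> F"
    proof (cases "S \<subseteq> T")
      case True
      then have "insert (n+1) T \<in> mapC n F S" using T by (simp add: dec_def)
      then show ?thesis using memC_ins assms T1 by blast
    next
      case False
      then have "T \<in> mapC n F S" using T by (simp add: dec_def)
      then show ?thesis using T1 False unfolding memC by auto
    qed
  qed
next
  show "F \<subseteq> dec n (mapC n F S) S"
  proof
    fix T assume T: "T \<in> F"
    then have a: "n+1 \<notin> T" "2 \<le> card T" using face_v[OF assms T] by simp_all
    show "T \<in> dec n (mapC n F S) S"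
    proof (cases "S \<subseteq> T")
      case True
      then have "insert (n+1) T \<in> mapC n F S" using T unfolding memC by blast
      then show ?thesis using a True by (simp add: dec_def)
    next
      case False
      then have "T \<in> mapC n F S" using T unfolding memC by blast
      then show ?thesis using a False by (simp add: dec_def)
    qed
  qed
qed

lemma dec_insS: "n+1 \<notin> S \<Longrightarrow> dec n (insert S X) S = dec n X S"
  by (auto simp: dec_def)

lemma dec_insE: "dec n (insert {i,n+1} X) {i} = dec n X {i}"
  unfolding dec_def
proof (rule Collect_cong)
  fix T
  show "(n+1 \<notin> T \<and> 2 \<le> card T \<and> (if {i} \<subseteq> T then insert (n+1) T \<in> insert {i,n+1} X else T \<in> insert {i,n+1} X))
     = (n+1 \<notin> T \<and> 2 \<le> card T \<and> (if {i} \<subseteq> T then insert (n+1) T \<in> X else T \<in> X))"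
  proof (cases "n+1 \<notin> T \<and> 2 \<le> card T")
    case False
    then show ?thesis by blast
  next
    case True
    show ?thesis
    proof (cases "i \<in> T")
      case iT: True
      have "insert (n+1) T \<noteq> {i,n+1}"
      proof
        assume "insert (n+1) T = {i,n+1}"
        then have "T = {i}" using True iT by blast
        then show False using True by simp
      qed
      then show ?thesis using iT by simp
    next
      case False
      have "T \<noteq> {i,n+1}" using True by blast
      then show ?thesis using False by simp
    qed
  qed
qed

lemma dec_D: "F \<in> wh_faces n \<Longrightarrow> S \<in> F \<Longrightarrow> dec n (mapD n F S) S = F"
proof -
  assume a: "F \<in> wh_faces n" "S \<in> F"
  then have "n+1 \<notin> S" using face_v by blast
  then show ?thesis unfolding mapD_def using dec_insS[of n S] dec_C[OF a(1)] by simp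
qed

lemma dec_E: "F \<in> wh_faces n \<Longrightarrow> dec n (mapE n F i) {i} = F"
  unfolding E_C using dec_insE dec_C by simp

lemma C_face:
  assumes n3: "n \<ge> 3" and F: "F \<in> wh_faces n" and Sne: "S \<noteq> {}"
  shows "mapC n F S \<in> wh_faces (n+1)"
  unfolding wh_faces_def
proof (intro CollectI conjI ballI subsetI)
  fix X assume "X \<in> mapC n F S"
  then consider T where "T \<in> F" "X = insert (n+1) T" | "X \<in> F" unfolding memC by blast
  then show "X \<in> wh_vertices (n+1)"
  proof cases
    case 1
    then have "T \<subseteq> {2..n}" "finite T" "2 \<le> card T" "card T \<le> n-2" "n+1 \<notin> T" using face_v[OF F 1(1)] by simp_all
    then show ?thesis using 1 unfolding wh_vertices_def by auto
  next
    case 2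
    then have "X \<subseteq> {2..n}" "finite X" "2 \<le> card X" "card X \<le> n-2" "n+1 \<notin> X" using face_v[OF F 2] by simp_all
    then show ?thesis unfolding wh_vertices_def by auto
  qed
next
  fix X Y assume X: "X \<in> mapC n F S" and Y: "Y \<in> mapC n F S"
  from X consider T where "T \<in> F" "S \<subseteq> T" "X = insert (n+1) T" | "X \<in> F" "\<not> S \<subseteq> X" unfolding memC by blast
  then show "wh_compatible X Y"
  proof cases
    case 1
    note X1 = this
    from Y consider U where "U \<in> F" "S \<subseteq> U" "Y = insert (n+1) U" | "Y \<in> F" "\<not> S \<subseteq> Y" unfolding memC by blast
    then show ?thesis
    proof cases
      case 1
      have "wh_compatible T U" using face_compat[OF F X1(1) 1(1)] .
      then show ?thesis using compat_ins[of T U S "n+1"] X1 1 Sne by simp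
    next
      case 2
      have "wh_compatible T Y" using face_compat[OF F X1(1) 2(1)] .
      moreover have "n+1 \<notin> Y" using face_v[OF F 2(1)] by simp
      ultimately show ?thesis using compat_mix[of T Y "n+1" S] X1 2 by simp
    qed
  next
    case 2
    note X2 = this
    from Y consider U where "U \<in> F" "S \<subseteq> U" "Y = insert (n+1) U" | "Y \<in> F" "\<not> S \<subseteq> Y" unfolding memC by blast
    then show ?thesis
    proof cases
      case 1
      have "wh_compatible U X" using face_compat[OF F 1(1) X2(1)] .
      moreover have "n+1 \<notin> X" using face_v[OF F X2(1)] by simp
      ultimately have "wh_compatible Y X" using compat_mix[of U X "n+1" S] X2 1 by simp
      then show ?thesis using compat_sym by blast
    next
      case 2
      then show ?thesis using X2 face_compat[OF F] by blast
    qed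
  qed
qed

lemma ins_face:
  assumes "G \<in> wh_faces m" "X \<in> wh_vertices m" "\<And>Y. Y \<in> G \<Longrightarrow> wh_compatible X Y"
  shows "insert X G \<in> wh_faces m"
  using assms compat_sym unfolding wh_faces_def wh_compatible_def by blast

lemma D_face:
  assumes n3: "n \<ge> 3" and F: "F \<in> wh_faces n" and S: "S \<in> F"
  shows "mapD n F S \<in> wh_faces (n+1)"
  unfolding mapD_def
proof (rule ins_face)
  have v: "S \<subseteq> {2..n}" "finite S" "2 \<le> card S" "card S \<le> n-2" "n+1 \<notin> S" using face_v[OF F S] by simp_all
  then have "S \<noteq> {}" by auto
  then show "mapC n F S \<in> wh_faces (n+1)" using C_face n3 F by blast
  show "S \<in> wh_vertices (n+1)" using v unfolding wh_vertices_def by auto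
  fix Y assume "Y \<in> mapC n F S"
  then consider T where "T \<in> F" "S \<subseteq> T" "Y = insert (n+1) T" | "Y \<in> F" unfolding memC by blast
  then show "wh_compatible S Y"
  proof cases
    case 1
    then show ?thesis unfolding wh_compatible_def by blast
  next
    case 2
    then show ?thesis using face_compat[OF F S] by blast
  qed
qed

lemma E_face:
  assumes n3: "n \<ge> 3" and F: "F \<in> wh_faces n" and i: "i \<in> {2..n}"
  shows "mapE n F i \<in> wh_faces (n+1)"
  unfolding E_C
proof (rule ins_face)
  show "mapC n F {i} \<in> wh_faces (n+1)" using C_face n3 F by blast
  show "{i, n+1} \<in> wh_vertices (n+1)" using i n3 unfolding wh_vertices_def by auto
  fix Y assume "Y \<in> mapC n F {i}"
  then consider T where "T \<in> F" "{i} \<subseteq> T" "Y = insert (n+1) T" | "Y \<in> F" "\<not> {i} \<subseteq> Y" unfolding memC by blast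
  then show "wh_compatible {i,n+1} Y"
  proof cases
    case 1
    then show ?thesis unfolding wh_compatible_def by blast
  next
    case 2
    then have "n+1 \<notin> Y" using face_v[OF F 2(1)] by simp
    then show ?thesis using 2 unfolding wh_compatible_def by blast
  qed
qed

lemma fv1: "G \<in> wh_faces (n+1) \<Longrightarrow> Y \<in> G \<Longrightarrow> Y \<subseteq> {2..n+1} \<and> finite Y \<and> 2 \<le> card Y \<and> card Y \<le> n-1"
  using face_vert[of G "n+1" Y] unfolding wh_vertices_def using finite_subset by fastforce

lemma sub_n: "Y \<subseteq> {2..n+1} \<Longrightarrow> n+1 \<notin> Y \<Longrightarrow> Y \<subseteq> {2..(n::nat)}"
proof
  fix x assume "Y \<subseteq> {2..n+1}" "n+1 \<notin> Y" "x \<in> Y"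
  then have "2 \<le> x" "x \<le> n+1" "x \<noteq> n+1" by auto
  then show "x \<in> {2..n}" by simp
qed

lemma card_int: "card {2..n::nat} = n - 1"
  by simp

lemma core:
  assumes n3: "n \<ge> 3" and G: "G \<in> wh_faces (n+1)" and M: "M \<in> G" "n+1 \<in> M"
    and Mmin: "\<And>Y. Y \<in> G \<Longrightarrow> n+1 \<in> Y \<Longrightarrow> card M \<le> card Y"
  defines "S \<equiv> M - {n+1}"
  defines "F \<equiv> dec n G S"
  shows "F \<in> wh_faces n \<and> (2 \<le> card S \<longrightarrow> S \<in> F \<and> (S \<in> G \<longrightarrow> G = mapD n F S) \<and> (S \<notin> G \<longrightarrow> G = mapC n F S))
     \<and> (card S < 2 \<longrightarrow> (\<exists>i\<in>{2..n}. S = {i} \<and> G = mapE n F i))"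
proof -
  have vG: "Y \<subseteq> {2..n+1} \<and> finite Y \<and> 2 \<le> card Y \<and> card Y \<le> n-1" if "Y \<in> G" for Y
    using fv1[OF G that] .
  have cG: "wh_compatible Y Z" if "Y \<in> G" "Z \<in> G" for Y Z
    using G that unfolding wh_faces_def by blast
  have finM: "finite M" and cM: "2 \<le> card M" using vG[OF M(1)] by auto
  have nS: "n+1 \<notin> S" unfolding S_def by blast
  have MS: "M = insert (n+1) S" unfolding S_def using M(2) by blast
  have finS: "finite S" using finM unfolding S_def by blast
  have cS: "card S = card M - 1" using MS finS nS by simp
  have cS1: "1 \<le> card S" using cS cM by simp
  have Sne: "S \<noteq> {}" using cS1 by auto
  have Ssub: "S \<subseteq> {2..n}" using vG[OF M(1)] nS unfolding S_def by auto
  have up: "M \<subseteq> Y" if "Y \<in> G" "n+1 \<in> Y" for Y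
  proof -
    have "wh_compatible M Y" using cG[OF M(1) that(1)] .
    moreover have "Y \<subseteq> M \<Longrightarrow> Y = M" using card_subset_eq[OF finM] Mmin[OF that] card_mono[OF finM]
      by (meson le_antisym)
    ultimately show ?thesis using M(2) that(2) unfolding wh_compatible_def by blast
  qed
  have low: "Y \<subseteq> S \<or> Y \<inter> S = {}" if "Y \<in> G" "n+1 \<notin> Y" for Y
  proof -
    have "wh_compatible Y M" using cG[OF that(1) M(1)] .
    then show ?thesis using M(2) that(2) unfolding wh_compatible_def S_def by blast
  qed
  have notsub: "Y = S" if "Y \<in> G" "n+1 \<notin> Y" "S \<subseteq> Y" for Y
    using low[OF that(1,2)] that(3) Sne by blast
  have Fdef: "T \<in> F \<longleftrightarrow> n+1 \<notin> T \<and> 2 \<le> card T \<and> (if S \<subseteq> T then insert (n+1) T \<in> G else T \<in> G)" for T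
    unfolding F_def dec_def by simp
  have FU: "(if S \<subseteq> T then insert (n+1) T else T) \<in> G \<and> (if S \<subseteq> T then insert (n+1) T else T) - {n+1} = T"
    if "T \<in> F" for T
    using that unfolding Fdef by (cases "S \<subseteq> T") auto
  have Fface: "F \<in> wh_faces n"
    unfolding wh_faces_def
  proof (intro CollectI conjI ballI subsetI)
    fix T assume T: "T \<in> F"
    then have T1: "n+1 \<notin> T" "2 \<le> card T" using Fdef by auto
    then have finT: "finite T" using card.infinite by force
    show "T \<in> wh_vertices n"
    proof (cases "S \<subseteq> T")
      case True
      then have "insert (n+1) T \<in> G" using T Fdef by auto
      from vG[OF this] have "insert (n+1) T \<subseteq> {2..n+1}" "card (insert (n+1) T) \<le> n-1" by auto
      then have "T \<subseteq> {2..n}" "card T \<le> n-2" using T1 finT sub_n[of T n] by auto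
      then show ?thesis using T1 unfolding wh_vertices_def by auto
    next
      case False
      then have "T \<in> G" using T Fdef by auto
      from vG[OF this] have a: "T \<subseteq> {2..n+1}" "card T \<le> n-1" by auto
      then have b: "T \<subseteq> {2..n}" using T1 sub_n by blast
      have "card T \<noteq> n - 1"
      proof
        assume "card T = n-1"
        then have "T = {2..n}" using card_subset_eq[OF _ b] by simp
        then show False using False Ssub by simp
      qed
      then have "card T \<le> n-2" using a by simp
      then show ?thesis using T1 b unfolding wh_vertices_def by auto
    qed
  next
    fix T U assume "T \<in> F" "U \<in> F"
    from FU[OF this(1)] FU[OF this(2)] show "wh_compatible T U"
      using compat_minus cG by metis
  qed
  have CG: "Y \<in> G" if "Y \<in> mapC n F S" for Y
  proof -
    from that consider T where "T \<in> F" "S \<subseteq> T" "Y = insert (n+1) T" | "Y \<in> F" "\<not> S \<subseteq> Y" unfolding memC by blast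
    then show ?thesis
    proof cases
      case 1
      then show ?thesis using Fdef by auto
    next
      case 2
      then show ?thesis using Fdef by auto
    qed
  qed
  have GC: "Y \<in> mapC n F S" if Y: "Y \<in> G" "Y \<noteq> S" "Y \<noteq> M \<or> 2 \<le> card S" for Y
  proof (cases "n+1 \<in> Y")
    case True
    define T where "T = Y - {n+1}"
    have YT: "Y = insert (n+1) T" unfolding T_def using True by blast
    have nT: "n+1 \<notin> T" unfolding T_def by blast
    have finY: "finite Y" using vG[OF Y(1)] by simp
    have finT: "finite T" using finY unfolding T_def by simp
    have MY: "M \<subseteq> Y" using up[OF Y(1) True] .
    have ST: "S \<subseteq> T" using MY unfolding S_def T_def by blast
    have cT: "card T = card Y - 1" using YT finT nT by simp
    have "2 \<le> card T"
    proof (cases "Y = M")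
      case True
      then show ?thesis using Y(3) cT cS by simp
    next
      case False
      then have "M \<subset> Y" using MY by blast
      then have "card M < card Y" using psubset_card_mono finY by blast
      then show ?thesis using cT cM by simp
    qed
    then have "T \<in> F" using Fdef nT ST YT Y(1) by auto
    then show ?thesis unfolding memC using ST YT by blast
  next
    case False
    have "\<not> S \<subseteq> Y" using notsub[OF Y(1) False] Y(2) by blast
    moreover have "2 \<le> card Y" using vG[OF Y(1)] by simp
    ultimately have "Y \<in> F" using Fdef False Y(1) by auto
    then show ?thesis unfolding memC using \<open>\<not> S \<subseteq> Y\<close> by blast
  qed
  have SnC: "S \<notin> mapC n F S"
    using nS unfolding memC by blast
  have part2: "2 \<le> card S \<longrightarrow> S \<in> F \<and> (S \<in> G \<longrightarrow> G = mapD n F S) \<and> (S \<notin> G \<longrightarrow> G = mapC n F S)"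
  proof
    assume c2: "2 \<le> card S"
    have "S \<in> F" using Fdef nS c2 MS M(1) by auto
    moreover have "S \<in> G \<longrightarrow> G = mapD n F S"
      unfolding mapD_def using GC CG c2 by blast
    moreover have "S \<notin> G \<longrightarrow> G = mapC n F S"
      using GC CG c2 by blast
    ultimately show "S \<in> F \<and> (S \<in> G \<longrightarrow> G = mapD n F S) \<and> (S \<notin> G \<longrightarrow> G = mapC n F S)" by blast
  qed
  have part3: "card S < 2 \<longrightarrow> (\<exists>i\<in>{2..n}. S = {i} \<and> G = mapE n F i)"
  proof
    assume c1: "card S < 2"
    then have "card S = 1" using cS1 by simp
    then obtain i where i: "S = {i}" using card_1_singletonE by blast
    have iin: "i \<in> {2..n}" using i Ssub by simp
    have SG: "S \<notin> G" using vG c1 by fastforce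
    have "G = insert {i,n+1} (mapC n F {i})"
      using GC CG SG M(1) MS i by (auto simp: insert_commute)
    then show "\<exists>i\<in>{2..n}. S = {i} \<and> G = mapE n F i"
      using iin i E_C by metis
  qed
  show ?thesis using Fface part2 part3 by blast
qed

lemma noN:
  assumes n3: "n \<ge> 3" and G: "G \<in> wh_faces (n+1)" and N: "\<forall>Y\<in>G. n+1 \<notin> Y"
  shows "G - {{2..n}} \<in> wh_faces n"
  unfolding wh_faces_def
proof (intro CollectI conjI ballI subsetI)
  fix Y assume Y: "Y \<in> G - {{2..n}}"
  then have a: "Y \<subseteq> {2..n+1}" "finite Y" "2 \<le> card Y" "card Y \<le> n-1" using fv1[OF G] by auto
  have nY: "n+1 \<notin> Y" using N Y by blast
  have b: "Y \<subseteq> {2..n}"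
  proof
    fix x assume "x \<in> Y"
    then have "x \<in> {2..n+1}" "x \<noteq> n+1" using a(1) nY by auto
    then show "x \<in> {2..n}" by auto
  qed
  have "Y \<subset> {2..n}" using b Y by blast
  then have "card Y < n - 1" using psubset_card_mono[of "{2..n}" Y] by simp
  then show "Y \<in> wh_vertices n" using a b unfolding wh_vertices_def by auto
next
  fix Y Z assume "Y \<in> G - {{2..n}}" "Z \<in> G - {{2..n}}"
  then show "wh_compatible Y Z" using G unfolding wh_faces_def by blast
qed

lemma A_face: "F \<in> wh_faces n \<Longrightarrow> F \<in> wh_faces (n+1)"
proof -
  assume F: "F \<in> wh_faces n"
  have "T \<in> wh_vertices (n+1)" if "T \<in> F" for T
    using face_v[OF F that] unfolding wh_vertices_def by auto
  then show ?thesis using F unfolding wh_faces_def by blast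
qed

lemma B_face: "n \<ge> 3 \<Longrightarrow> F \<in> wh_faces n \<Longrightarrow> mapB n F \<in> wh_faces (n+1)"
  unfolding mapB_def
proof (rule ins_face)
  assume n3: "n \<ge> 3" and F: "F \<in> wh_faces n"
  show "F \<in> wh_faces (n+1)" using A_face F .
  show "{2..n} \<in> wh_vertices (n+1)" using n3 unfolding wh_vertices_def by auto
  fix Y assume "Y \<in> F"
  then show "wh_compatible {2..n} Y" using face_v[OF F] unfolding wh_compatible_def by blast
qed

lemma notC2:
  assumes F: "F \<in> wh_faces n" and j: "j \<le> n"
  shows "{j,n+1} \<notin> mapC n F S"
proof
  assume "{j,n+1} \<in> mapC n F S"
  then have "insert (n+1) {j} \<in> mapC n F S" by (simp add: insert_commute)
  moreover have "n+1 \<notin> {j}" using j by simp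
  ultimately have "{j} \<in> F" using memC_ins[OF F] by blast
  then show False using face_v[OF F] by fastforce
qed

lemma memE2:
  assumes F: "F \<in> wh_faces n" and j: "j \<le> n" and i: "i \<le> n" and h: "{j,n+1} \<in> mapE n F i"
  shows "j = i"
proof -
  have "{j,n+1} = {i,n+1}" using h notC2[OF F j] unfolding E_C by blast
  then show ?thesis using i j by (metis doubleton_eq_iff Suc_eq_plus1 not_less_eq_eq)
qed

lemma SnC: "n+1 \<notin> S \<Longrightarrow> S \<notin> mapC n F S"
  unfolding memC by blast

lemma insC: "S \<in> F \<Longrightarrow> insert (n+1) S \<in> mapC n F S"
  unfolding memC by blast

lemma CD_S:
  assumes F1: "F1 \<in> wh_faces n" "S1 \<in> F1" and F2: "F2 \<in> wh_faces n" "S2 \<in> F2"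
    and h: "insert (n+1) S1 \<in> mapD n F2 S2"
  shows "S2 \<subseteq> S1"
proof -
  have n1: "n+1 \<notin> S1" using face_v[OF F1] by blast
  have "insert (n+1) S1 \<noteq> S2" using face_v[OF F2] by blast
  then have "insert (n+1) S1 \<in> mapC n F2 S2" using h unfolding mapD_def by blast
  then show ?thesis using memC_ins[OF F2(1) n1] by blast
qed

lemma CC_S:
  assumes F1: "F1 \<in> wh_faces n" "S1 \<in> F1" and F2: "F2 \<in> wh_faces n"
    and h: "insert (n+1) S1 \<in> mapC n F2 S2"
  shows "S2 \<subseteq> S1"
proof -
  have n1: "n+1 \<notin> S1" using face_v[OF F1] by blast
  then show ?thesis using memC_ins[OF F2(1) n1 h] by blast
qed

lemma notfull: "n \<ge> 3 \<Longrightarrow> F \<in> wh_faces n \<Longrightarrow> {2..n} \<notin> F"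
proof
  assume n3: "n \<ge> 3" and F: "F \<in> wh_faces n" and "{2..n} \<in> F"
  then have "card {2..n} \<le> n-2" using face_v[OF F] by blast
  then show False using n3 by simp
qed

lemma face_n1: "F \<in> wh_faces n \<Longrightarrow> T \<in> F \<Longrightarrow> n+1 \<notin> T"
  using face_v by blast

theorem mainTheorem4:
  fixes n :: nat
  assumes "n \<ge> 3"
  shows
    "inj_on mapA (wh_faces n) \<and>
     inj_on (mapB n) (wh_faces n) \<and>
     inj_on (\<lambda>(F, S). mapC n F S) (domCD n) \<and>
     inj_on (\<lambda>(F, S). mapD n F S) (domCD n) \<and>
     inj_on (\<lambda>(F, i). mapE n F i) (domE n) \<and>
     imA n \<subseteq> wh_faces (n+1) \<and> imB n \<subseteq> wh_faces (n+1) \<and> imC n \<subseteq> wh_faces (n+1) \<and>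
     imD n \<subseteq> wh_faces (n+1) \<and> imE n \<subseteq> wh_faces (n+1) \<and>
     wh_faces (n+1) = imA n \<union> imB n \<union> imC n \<union> imD n \<union> imE n \<and>
     imA n \<inter> imB n = {} \<and> imA n \<inter> imC n = {} \<and> imA n \<inter> imD n = {} \<and> imA n \<inter> imE n = {} \<and>
     imB n \<inter> imC n = {} \<and> imB n \<inter> imD n = {} \<and> imB n \<inter> imE n = {} \<and>
     imC n \<inter> imD n = {} \<and> imC n \<inter> imE n = {} \<and>
     imD n \<inter> imE n = {} \<and>
     (\<forall>i\<in>{2..n}.
        (\<lambda>F. mapE n F i) ` wh_faces n = {G \<in> wh_faces (n+1). {i, n+1} \<in> G} \<and>
        (\<exists>f. bij_betw f (wh_faces n) ((\<lambda>F. mapE n F i) ` wh_faces n) \<and>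
             (\<forall>F\<in>wh_faces n. \<forall>G\<in>wh_faces n. F \<subseteq> G \<longleftrightarrow> f F \<subseteq> f G)) \<and>
        (\<forall>G\<in>(\<lambda>F. mapE n F i) ` wh_faces n. \<forall>H\<in>wh_faces (n+1).
             G \<subseteq> H \<longrightarrow> H \<in> (\<lambda>F. mapE n F i) ` wh_faces n))"
proof -
  have n3: "n \<ge> 3" using assms .
  have domCD: "p \<in> domCD n \<longleftrightarrow> fst p \<in> wh_faces n \<and> snd p \<in> fst p" for p
    unfolding domCD_def by (cases p) auto
  have domE: "p \<in> domE n \<longleftrightarrow> fst p \<in> wh_faces n \<and> snd p \<in> {2..n}" for p
    unfolding domE_def by (cases p) auto
  have cardI: "card {2..n} = n - 1" by simp
  have iA: "inj_on mapA (wh_faces n)" unfolding mapA_def by (rule inj_onI) simp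
  have iB: "inj_on (mapB n) (wh_faces n)"
  proof (rule inj_onI)
    fix F G assume F: "F \<in> wh_faces n" and G: "G \<in> wh_faces n" and e: "mapB n F = mapB n G"
    have "{2..n} \<notin> F" using notfull[OF n3 F] .
    moreover have "{2..n} \<notin> G" using notfull[OF n3 G] .
    ultimately show "F = G" using e unfolding mapB_def by (simp add: insert_ident)
  qed
  have iC: "inj_on (\<lambda>(F, S). mapC n F S) (domCD n)"
  proof (rule inj_onI)
    fix p q assume p: "p \<in> domCD n" and q: "q \<in> domCD n" and e: "(\<lambda>(F, S). mapC n F S) p = (\<lambda>(F, S). mapC n F S) q"
    obtain F1 S1 where p1: "p = (F1,S1)" by (cases p)
    obtain F2 S2 where q1: "q = (F2,S2)" by (cases q)
    have F1: "F1 \<in> wh_faces n" "S1 \<in> F1" using p p1 domCD by auto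
    have F2: "F2 \<in> wh_faces n" "S2 \<in> F2" using q q1 domCD by auto
    have e': "mapC n F1 S1 = mapC n F2 S2" using e p1 q1 by simp
    have "S2 \<subseteq> S1" using CC_S[OF F1 F2(1)] insC[OF F1(2)] e' by metis
    moreover have "S1 \<subseteq> S2" using CC_S[OF F2 F1(1)] insC[OF F2(2)] e' by metis
    ultimately have "S1 = S2" by blast
    moreover then have "F1 = F2" using dec_C[OF F1(1)] dec_C[OF F2(1)] e' by metis
    ultimately show "p = q" using p1 q1 by simp
  qed
  have iD: "inj_on (\<lambda>(F, S). mapD n F S) (domCD n)"
  proof (rule inj_onI)
    fix p q assume p: "p \<in> domCD n" and q: "q \<in> domCD n" and e: "(\<lambda>(F, S). mapD n F S) p = (\<lambda>(F, S). mapD n F S) q"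
    obtain F1 S1 where p1: "p = (F1,S1)" by (cases p)
    obtain F2 S2 where q1: "q = (F2,S2)" by (cases q)
    have F1: "F1 \<in> wh_faces n" "S1 \<in> F1" using p p1 domCD by auto
    have F2: "F2 \<in> wh_faces n" "S2 \<in> F2" using q q1 domCD by auto
    have e': "mapD n F1 S1 = mapD n F2 S2" using e p1 q1 by simp
    have i1: "insert (n+1) S1 \<in> mapD n F1 S1" using insC[OF F1(2)] unfolding mapD_def by blast
    have i2: "insert (n+1) S2 \<in> mapD n F2 S2" using insC[OF F2(2)] unfolding mapD_def by blast
    have "S2 \<subseteq> S1" using CD_S[OF F1 F2] i1 e' by metis
    moreover have "S1 \<subseteq> S2" using CD_S[OF F2 F1] i2 e' by metis
    ultimately have "S1 = S2" by blast
    moreover then have "F1 = F2" using dec_D[OF F1] dec_D[OF F2] e' by metis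
    ultimately show "p = q" using p1 q1 by simp
  qed
  have iE: "inj_on (\<lambda>(F, i). mapE n F i) (domE n)"
  proof (rule inj_onI)
    fix p q assume p: "p \<in> domE n" and q: "q \<in> domE n" and e: "(\<lambda>(F, i). mapE n F i) p = (\<lambda>(F, i). mapE n F i) q"
    obtain F1 i1 where p1: "p = (F1,i1)" by (cases p)
    obtain F2 i2 where q1: "q = (F2,i2)" by (cases q)
    have F1: "F1 \<in> wh_faces n" "i1 \<in> {2..n}" using p p1 domE by auto
    have F2: "F2 \<in> wh_faces n" "i2 \<in> {2..n}" using q q1 domE by auto
    have e': "mapE n F1 i1 = mapE n F2 i2" using e p1 q1 by simp
    have "{i1,n+1} \<in> mapE n F1 i1" unfolding E_C by blast
    then have "i1 = i2" using memE2[OF F2(1)] F1(2) F2(2) e' by simp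
    moreover then have "F1 = F2" using dec_E[OF F1(1)] dec_E[OF F2(1)] e' by metis
    ultimately show "p = q" using p1 q1 by simp
  qed
  have fA: "imA n \<subseteq> wh_faces (n+1)" unfolding imA_def mapA_def using A_face by blast
  have fB: "imB n \<subseteq> wh_faces (n+1)" unfolding imB_def using B_face n3 by blast
  have fC: "imC n \<subseteq> wh_faces (n+1)"
  proof
    fix X assume "X \<in> imC n"
    then obtain F S where "(F,S) \<in> domCD n" "X = mapC n F S" unfolding imC_def by auto
    then have "F \<in> wh_faces n" "S \<in> F" "X = mapC n F S" using domCD by auto
    moreover then have "S \<noteq> {}" using face_v[of F n S] by auto
    ultimately show "X \<in> wh_faces (n+1)" using C_face n3 by blast
  qed
  have fD: "imD n \<subseteq> wh_faces (n+1)"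
  proof
    fix X assume "X \<in> imD n"
    then obtain F S where "(F,S) \<in> domCD n" "X = mapD n F S" unfolding imD_def by auto
    then have "F \<in> wh_faces n" "S \<in> F" "X = mapD n F S" using domCD by auto
    then show "X \<in> wh_faces (n+1)" using D_face n3 by blast
  qed
  have fE: "imE n \<subseteq> wh_faces (n+1)"
  proof
    fix X assume "X \<in> imE n"
    then obtain F i where "(F,i) \<in> domE n" "X = mapE n F i" unfolding imE_def by auto
    then have "F \<in> wh_faces n" "i \<in> {2..n}" "X = mapE n F i" using domE by auto
    then show "X \<in> wh_faces (n+1)" using E_face n3 by blast
  qed
  have mA: "\<forall>Y\<in>X. n+1 \<notin> Y" if X: "X \<in> imA n" for X
  proof -
    have "X \<in> wh_faces n" using X unfolding imA_def mapA_def by simp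
    then show ?thesis using face_n1 by blast
  qed
  have mB: "\<forall>Y\<in>X. n+1 \<notin> Y" if X: "X \<in> imB n" for X
  proof -
    obtain F where F: "F \<in> wh_faces n" "X = insert {2..n} F" using X unfolding imB_def mapB_def by blast
    then show ?thesis using face_n1[OF F(1)] by auto
  qed
  have mB2: "X \<in> imB n \<Longrightarrow> {2..n} \<in> X" for X
    unfolding imB_def mapB_def by auto
  have mA2: "{2..n} \<notin> X" if X: "X \<in> imA n" for X
  proof -
    have "X \<in> wh_faces n" using X unfolding imA_def mapA_def by simp
    then show ?thesis using notfull[OF n3] by blast
  qed
  have mC: "\<exists>F S. F \<in> wh_faces n \<and> S \<in> F \<and> X = mapC n F S" if X: "X \<in> imC n" for X
    using X unfolding imC_def domCD_def by auto
  have mD: "\<exists>F S. F \<in> wh_faces n \<and> S \<in> F \<and> X = mapD n F S" if X: "X \<in> imD n" for X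
    using X unfolding imD_def domCD_def by auto
  have mE: "\<exists>F i. F \<in> wh_faces n \<and> i \<in> {2..n} \<and> X = mapE n F i" if X: "X \<in> imE n" for X
    using X unfolding imE_def domE_def by auto
  have hC: "\<exists>Y\<in>X. n+1 \<in> Y" if X: "X \<in> imC n" for X
  proof -
    obtain F S where "S \<in> F" "X = mapC n F S" using mC[OF X] by blast
    then have "insert (n+1) S \<in> X" using insC by blast
    then show ?thesis by blast
  qed
  have hD: "\<exists>Y\<in>X. n+1 \<in> Y" if X: "X \<in> imD n" for X
  proof -
    obtain F S where "S \<in> F" "X = mapD n F S" using mD[OF X] by blast
    then have "insert (n+1) S \<in> X" using insC unfolding mapD_def by blast
    then show ?thesis by blast
  qed
  have hE: "\<exists>Y\<in>X. n+1 \<in> Y" if X: "X \<in> imE n" for X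
  proof -
    obtain F i where "X = mapE n F i" using mE[OF X] by blast
    then have "{i, n+1} \<in> X" unfolding E_C by blast
    then show ?thesis by blast
  qed
  have dAB: "imA n \<inter> imB n = {}" using mA2 mB2 by blast
  have dAC: "imA n \<inter> imC n = {}" using mA hC by blast
  have dAD: "imA n \<inter> imD n = {}" using mA hD by blast
  have dAE: "imA n \<inter> imE n = {}" using mA hE by blast
  have dBC: "imB n \<inter> imC n = {}" using mB hC by blast
  have dBD: "imB n \<inter> imD n = {}" using mB hD by blast
  have dBE: "imB n \<inter> imE n = {}" using mB hE by blast
  have dCD: "imC n \<inter> imD n = {}"
  proof (rule ccontr)
    assume "imC n \<inter> imD n \<noteq> {}"
    then obtain X where "X \<in> imC n" "X \<in> imD n" by blast
    then obtain F1 S1 F2 S2 where F1: "F1 \<in> wh_faces n" "S1 \<in> F1" and F2: "F2 \<in> wh_faces n" "S2 \<in> F2"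
      and e: "mapC n F1 S1 = mapD n F2 S2" using mC mD by metis
    have "S2 \<subseteq> S1" using CD_S[OF F1 F2] insC[OF F1(2)] e by metis
    moreover have "insert (n+1) S2 \<in> mapC n F1 S1" using insC[OF F2(2)] e unfolding mapD_def by blast
    then have "S1 \<subseteq> S2" using CC_S[OF F2 F1(1)] by blast
    ultimately have "S1 = S2" by blast
    moreover have "S2 \<in> mapC n F1 S1" using e unfolding mapD_def by blast
    moreover have "n+1 \<notin> S1" using face_v[OF F1] by blast
    ultimately show False using SnC by metis
  qed
  have dCE: "imC n \<inter> imE n = {}"
  proof (rule ccontr)
    assume "imC n \<inter> imE n \<noteq> {}"
    then obtain X where "X \<in> imC n" "X \<in> imE n" by blast
    then obtain F1 S1 F2 i where F1: "F1 \<in> wh_faces n" "S1 \<in> F1" and F2: "F2 \<in> wh_faces n" "i \<in> {2..n}"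
      and e: "mapC n F1 S1 = mapE n F2 i" using mC mE by metis
    have "{i,n+1} \<in> mapC n F1 S1" using e unfolding E_C by blast
    then show False using notC2[OF F1(1)] F2(2) by simp
  qed
  have dDE: "imD n \<inter> imE n = {}"
  proof (rule ccontr)
    assume "imD n \<inter> imE n \<noteq> {}"
    then obtain X where "X \<in> imD n" "X \<in> imE n" by blast
    then obtain F1 S1 F2 i where F1: "F1 \<in> wh_faces n" "S1 \<in> F1" and F2: "F2 \<in> wh_faces n" "i \<in> {2..n}"
      and e: "mapD n F1 S1 = mapE n F2 i" using mD mE by metis
    have "{i,n+1} \<in> mapD n F1 S1" using e unfolding E_C by blast
    moreover have "{i,n+1} \<noteq> S1" using face_v[OF F1] by blast
    ultimately have "{i,n+1} \<in> mapC n F1 S1" unfolding mapD_def by blast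
    then show False using notC2[OF F1(1)] F2(2) by simp
  qed
  have cov: "G \<in> imA n \<union> imB n \<union> imC n \<union> imD n \<union> imE n" if G: "G \<in> wh_faces (n+1)" for G
  proof (cases "\<exists>Y\<in>G. n+1 \<in> Y")
    case True
    then obtain Y0 where "Y0 \<in> G \<and> n+1 \<in> Y0" by blast
    then obtain M where M: "M \<in> G \<and> n+1 \<in> M" and Mmin: "\<forall>Y. Y \<in> G \<and> n+1 \<in> Y \<longrightarrow> card M \<le> card Y"
      using ex_has_least_nat[of "\<lambda>Y. Y \<in> G \<and> n+1 \<in> Y" Y0 card] by blast
    define S where "S = M - {n+1}"
    define F where "F = dec n G S"
    have c: "F \<in> wh_faces n \<and> (2 \<le> card S \<longrightarrow> S \<in> F \<and> (S \<in> G \<longrightarrow> G = mapD n F S) \<and> (S \<notin> G \<longrightarrow> G = mapC n F S))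
     \<and> (card S < 2 \<longrightarrow> (\<exists>i\<in>{2..n}. S = {i} \<and> G = mapE n F i))"
      unfolding S_def F_def using core[OF n3 G] M Mmin by blast
    show ?thesis
    proof (cases "2 \<le> card S")
      case True
      then have FS: "(F,S) \<in> domCD n" using c domCD by simp
      show ?thesis
      proof (cases "S \<in> G")
        case True
        then have "G \<in> imD n" using c FS \<open>2 \<le> card S\<close> unfolding imD_def by force
        then show ?thesis by blast
      next
        case False
        then have "G \<in> imC n" using c FS \<open>2 \<le> card S\<close> unfolding imC_def by force
        then show ?thesis by blast
      qed
    next
      case False
      then obtain i where "i \<in> {2..n}" "G = mapE n F i" using c by auto
      then have "G \<in> imE n" using c unfolding imE_def domE_def by force
      then show ?thesis by blast
    qed
  next
    case False
    then have N: "\<forall>Y\<in>G. n+1 \<notin> Y" by blast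
    have F: "G - {{2..n}} \<in> wh_faces n" using noN[OF n3 G N] .
    show ?thesis
    proof (cases "{2..n} \<in> G")
      case True
      then have "G = mapB n (G - {{2..n}})" unfolding mapB_def by blast
      then have "G \<in> imB n" using F unfolding imB_def by blast
      then show ?thesis by blast
    next
      case False
      then have "G = mapA (G - {{2..n}})" unfolding mapA_def by blast
      then have "G \<in> imA n" using F unfolding imA_def by blast
      then show ?thesis by blast
    qed
  qed
  have eq: "wh_faces (n+1) = imA n \<union> imB n \<union> imC n \<union> imD n \<union> imE n"
    using cov fA fB fC fD fE by blast
  have partI: "(\<lambda>F. mapE n F i) ` wh_faces n = {G \<in> wh_faces (n+1). {i, n+1} \<in> G} \<and>
        (\<exists>f. bij_betw f (wh_faces n) ((\<lambda>F. mapE n F i) ` wh_faces n) \<and>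
             (\<forall>F\<in>wh_faces n. \<forall>G\<in>wh_faces n. F \<subseteq> G \<longleftrightarrow> f F \<subseteq> f G)) \<and>
        (\<forall>G\<in>(\<lambda>F. mapE n F i) ` wh_faces n. \<forall>H\<in>wh_faces (n+1).
             G \<subseteq> H \<longrightarrow> H \<in> (\<lambda>F. mapE n F i) ` wh_faces n)" if i: "i \<in> {2..n}" for i
  proof -
    have img1: "G \<in> wh_faces (n+1) \<and> {i, n+1} \<in> G" if GG: "G \<in> (\<lambda>F. mapE n F i) ` wh_faces n" for G
    proof -
      obtain F where F: "F \<in> wh_faces n" "G = mapE n F i" using GG by blast
      have "G \<in> wh_faces (n+1)" using E_face[OF n3 F(1) i] F(2) by simp
      moreover have "{i, n+1} \<in> G" using F(2) unfolding E_C by simp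
      ultimately show ?thesis by simp
    qed
    have img2: "G \<in> (\<lambda>F. mapE n F i) ` wh_faces n" if G: "G \<in> wh_faces (n+1)" and M: "{i,n+1} \<in> G" for G
    proof -
      have cM: "card {i,n+1} = 2" using i by simp
      have Mmin: "card {i,n+1} \<le> card Y" if "Y \<in> G" "n+1 \<in> Y" for Y
        using fv1[OF G that(1)] cM by simp
      have S: "{i,n+1} - {n+1} = {i}" using i by auto
      have n1: "n+1 \<in> {i,n+1}" by simp
      note c0 = core[OF n3 G M n1 Mmin]
      have c: "dec n G {i} \<in> wh_faces n \<and> (card {i} < 2 \<longrightarrow> (\<exists>j\<in>{2..n}. {i} = {j} \<and> G = mapE n (dec n G {i}) j))"
        using c0 unfolding S by blast
      then obtain j where "{i} = {j}" "G = mapE n (dec n G {i}) j" by auto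
      then have "G = mapE n (dec n G {i}) i" by simp
      then show ?thesis using c by blast
    qed
    have img: "(\<lambda>F. mapE n F i) ` wh_faces n = {G \<in> wh_faces (n+1). {i, n+1} \<in> G}"
      using img1 img2 by blast
    have mono: "F \<subseteq> G \<longleftrightarrow> mapE n F i \<subseteq> mapE n G i" if FG: "F \<in> wh_faces n" "G \<in> wh_faces n" for F G
    proof
      assume "F \<subseteq> G" then show "mapE n F i \<subseteq> mapE n G i" unfolding mapE_def by auto
    next
      assume "mapE n F i \<subseteq> mapE n G i"
      then have "dec n (mapE n F i) {i} \<subseteq> dec n (mapE n G i) {i}" by (rule dec_mono)
      then show "F \<subseteq> G" unfolding dec_E[OF FG(1)] dec_E[OF FG(2)] .
    qed
    have inj: "inj_on (\<lambda>F. mapE n F i) (wh_faces n)"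
    proof (rule inj_onI)
      fix F G assume "F \<in> wh_faces n" "G \<in> wh_faces n" "mapE n F i = mapE n G i"
      then show "F = G" using mono[of F G] mono[of G F] by simp
    qed
    have bij: "bij_betw (\<lambda>F. mapE n F i) (wh_faces n) ((\<lambda>F. mapE n F i) ` wh_faces n)"
      using inj by (simp add: bij_betw_def)
    have upper: "\<forall>G\<in>(\<lambda>F. mapE n F i) ` wh_faces n. \<forall>H\<in>wh_faces (n+1).
             G \<subseteq> H \<longrightarrow> H \<in> (\<lambda>F. mapE n F i) ` wh_faces n"
    proof (intro ballI impI)
      fix G H assume "G \<in> (\<lambda>F. mapE n F i) ` wh_faces n" "H \<in> wh_faces (n+1)" "G \<subseteq> H"
      then show "H \<in> (\<lambda>F. mapE n F i) ` wh_faces n" using img1 img2 by blast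
    qed
    have ex: "\<exists>f. bij_betw f (wh_faces n) ((\<lambda>F. mapE n F i) ` wh_faces n) \<and>
             (\<forall>F\<in>wh_faces n. \<forall>G\<in>wh_faces n. F \<subseteq> G \<longleftrightarrow> f F \<subseteq> f G)"
      using bij mono by blast
    show ?thesis using img ex upper by simp
  qed
  show ?thesis
    apply (intro conjI)
    apply (fact iA iB iC iD iE fA fB fC fD fE eq dAB dAC dAD dAE dBC dBD dBE dCD dCE dDE)+
    using partI by (intro ballI)
qed

end
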